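(* For every integer $n\geq 1$ there exists a $4$-dimensional Minkowski space $X$ whose norm is smooth and strictly convex and such that $m(X)\geq n$.
   Context: A Minkowski space is a finite-dimensional real normed space $(X,\|\cdot\|)$. For a set $S\subseteq X$, its midpoint set is $M(S)=\{\tfrac12(x+y): x,y\in S,\ x\neq y\}$. A set $S\subseteq X$ is an M-set if every vector in $M(S)$ has norm exactly $1$ and every vector in $S$ has norm strictly greater than $1$. $m(X)$ denotes the largest cardinality of an M-set in $X$ if such a largest finite cardinality exists, and $m(X)=\infty$ otherwise. The norm is smooth if each boundary point of the unit ball has a unique supporting hyperplane, and strictly convex if the unit sphere contains no nondegenerate line segment. *)

theory Defs
  imports "HOL-Analysis.Analysis" "HOL-Library.Extended_Nat"
begin

text \<open>A Minkowski space of dimension 4 is modelled (up to linear isometry) as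
  real^4 equipped with an arbitrary norm function N.\<close>

definition is_norm :: "(real^4 \<Rightarrow> real) \<Rightarrow> bool" where
  "is_norm N \<longleftrightarrow>
     (\<forall>x. N x = 0 \<longleftrightarrow> x = 0) \<and>
     (\<forall>x. N x \<ge> 0) \<and>
     (\<forall>c x. N (c *\<^sub>R x) = \<bar>c\<bar> * N x) \<and>
     (\<forall>x y. N (x + y) \<le> N x + N y)"

definition unit_ball_N :: "(real^4 \<Rightarrow> real) \<Rightarrow> (real^4) set" where
  "unit_ball_N N = {y. N y \<le> 1}"

definition unit_sphere_N :: "(real^4 \<Rightarrow> real) \<Rightarrow> (real^4) set" where
  "unit_sphere_N N = {y. N y = 1}"

definition supporting_hyperplane :: "(real^4) set \<Rightarrow> real^4 \<Rightarrow> (real^4) set \<Rightarrow> bool" where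
  "supporting_hyperplane B x H \<longleftrightarrow>
     (\<exists>a c. a \<noteq> 0 \<and> H = {y. a \<bullet> y = c} \<and> x \<in> H \<and> (\<forall>y\<in>B. a \<bullet> y \<le> c))"

definition smooth_norm :: "(real^4 \<Rightarrow> real) \<Rightarrow> bool" where
  "smooth_norm N \<longleftrightarrow>
     (\<forall>x\<in>unit_sphere_N N. \<exists>!H. supporting_hyperplane (unit_ball_N N) x H)"

definition strictly_convex_norm :: "(real^4 \<Rightarrow> real) \<Rightarrow> bool" where
  "strictly_convex_norm N \<longleftrightarrow>
     (\<forall>x y. x \<noteq> y \<longrightarrow> \<not> closed_segment x y \<subseteq> unit_sphere_N N)"

definition midpoint_set :: "(real^4) set \<Rightarrow> (real^4) set" where
  "midpoint_set S = {(1/2) *\<^sub>R (x + y) | x y. x \<in> S \<and> y \<in> S \<and> x \<noteq> y}"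

definition M_set :: "(real^4 \<Rightarrow> real) \<Rightarrow> (real^4) set \<Rightarrow> bool" where
  "M_set N S \<longleftrightarrow> (\<forall>v\<in>midpoint_set S. N v = 1) \<and> (\<forall>x\<in>S. N x > 1)"

definition m_val :: "(real^4 \<Rightarrow> real) \<Rightarrow> enat" where
  "m_val N =
     (if \<exists>k::nat. (\<exists>S. M_set N S \<and> finite S \<and> card S = k) \<and>
                 (\<forall>S. M_set N S \<longrightarrow> finite S \<and> card S \<le> k)
      then enat (GREATEST k. \<exists>S. M_set N S \<and> finite S \<and> card S = k)
      else \<infinity>)"

end

theory Submission
  imports Defs
begin


locale gfun =
  fixes G :: "real^4 \<Rightarrow> real" and g :: "real^4 \<Rightarrow> real^4" and K :: "real^4 \<Rightarrow> real" and eps :: real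
  assumes sub: "\<And>x y. G y \<ge> G x + g x \<bullet> (y - x)"
  and up: "\<And>x t v. G (x + t *\<^sub>R v) \<le> G x + t * (g x \<bullet> v) + t^2 * K v"
  and even: "\<And>x. G (-x) = G x"
  and G0: "G 0 = 0"
  and coer: "\<And>x. eps * (x \<bullet> x) \<le> G x" and epos: "eps > 0"
  and cont: "continuous_on UNIV G"
  and strict: "\<And>x y. x \<noteq> y \<Longrightarrow> G (midpoint x y) < (G x + G y)/2"
begin

lemma convex: assumes "0 \<le> u" "u \<le> 1"
  shows "G ((1-u) *\<^sub>R x + u *\<^sub>R y) \<le> (1-u) * G x + u * G y"
proof -
  define z where "z = (1-u) *\<^sub>R x + u *\<^sub>R y"
  have 1: "G x \<ge> G z + g z \<bullet> (x - z)" by (rule sub)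
  have 2: "G y \<ge> G z + g z \<bullet> (y - z)" by (rule sub)
  have "(1-u) * (g z \<bullet> (x - z)) + u * (g z \<bullet> (y - z)) = g z \<bullet> ((1-u) *\<^sub>R x + u *\<^sub>R y - z)"
    by (simp add: inner_diff_right inner_add_right algebra_simps)
  also have "\<dots> = 0" by (simp add: z_def)
  finally have "(1-u) * (g z \<bullet> (x - z)) + u * (g z \<bullet> (y - z)) = 0" .
  moreover have "(1-u) * G x \<ge> (1-u) * (G z + g z \<bullet> (x - z))" using 1 assms by (intro mult_left_mono) auto
  moreover have "u * G y \<ge> u * (G z + g z \<bullet> (y - z))" using 2 assms by (intro mult_left_mono) auto
  ultimately show ?thesis unfolding z_def[symmetric] by (simp add: algebra_simps)
qed

lemma scale_le: assumes "0 \<le> s" "s \<le> 1" shows "G (s *\<^sub>R x) \<le> s * G x"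
  using convex[OF assms, of 0 x] by (simp add: G0)

lemma Gnn: "G x \<ge> 0"
proof -
  have "eps * (x \<bullet> x) \<ge> 0" using epos by simp
  thus ?thesis using coer[of x] by linarith
qed

lemma cont_at: "\<forall>e>0. \<exists>d>0. \<forall>y. dist y x < d \<longrightarrow> \<bar>G y - G x\<bar> < e"
  using cont unfolding continuous_on_iff by (auto simp: dist_real_def)

definition L where "L x = {l. 0 < l \<and> G (inverse l *\<^sub>R x) \<le> 1}"
definition N where "N x = Inf (L x)"

lemma L_ne: "L x \<noteq> {}"
proof -
  obtain d where d: "d > 0" "\<forall>y. dist y 0 < d \<longrightarrow> \<bar>G y - G 0\<bar> < 1"
    using cont_at[of 0] by (meson zero_less_one)
  define l where "l = 2 * norm x / d + 1"
  have "0 \<le> 2 * norm x / d" using d by simp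
  hence lpos: "l > 0" unfolding l_def by linarith
  have "norm (inverse l *\<^sub>R x) = norm x / l" using lpos by (simp add: field_simps)
  also have "\<dots> < d"
  proof -
    have "norm x < d * l" unfolding l_def using d
      by (simp add: algebra_simps) (smt (verit) norm_ge_zero)
    thus ?thesis using lpos by (simp add: field_simps)
  qed
  finally have "dist (inverse l *\<^sub>R x) 0 < d" by simp
  hence "\<bar>G (inverse l *\<^sub>R x) - G 0\<bar> < 1" using d(2) by blast
  hence "G (inverse l *\<^sub>R x) < 1" using G0 by linarith
  thus ?thesis using lpos unfolding L_def by auto
qed

lemma L_bdd: "bdd_below (L x)" unfolding L_def by (rule bdd_belowI[of _ 0]) auto

lemma L_up: assumes "l \<in> L x" "l \<le> m" shows "m \<in> L x"
proof -
  have lpos: "l > 0" and Gl: "G (inverse l *\<^sub>R x) \<le> 1" using assms unfolding L_def by auto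
  have mpos: "m > 0" using lpos assms by simp
  have eq: "inverse m *\<^sub>R x = (l / m) *\<^sub>R (inverse l *\<^sub>R x)" using lpos mpos by (simp add: field_simps)
  have "G (inverse m *\<^sub>R x) \<le> (l/m) * G (inverse l *\<^sub>R x)"
    unfolding eq by (rule scale_le) (use lpos mpos assms in auto)
  also have "\<dots> \<le> (l/m) * 1" using Gl lpos mpos by (intro mult_left_mono) auto
  also have "\<dots> \<le> 1" using lpos mpos assms by simp
  finally show ?thesis using mpos unfolding L_def by auto
qed

lemma N_nn: "N x \<ge> 0"
  unfolding N_def using L_ne by (rule cInf_greatest) (auto simp: L_def)

lemma char: assumes "t > 0" shows "N x \<le> t \<longleftrightarrow> G (inverse t *\<^sub>R x) \<le> 1"
proof
  assume "G (inverse t *\<^sub>R x) \<le> 1"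
  hence "t \<in> L x" using assms unfolding L_def by auto
  thus "N x \<le> t" unfolding N_def by (rule cInf_lower[OF _ L_bdd])
next
  assume Nt: "N x \<le> t"
  have all: "G (inverse m *\<^sub>R x) \<le> 1" if "m > t" for m
  proof -
    have "Inf (L x) < m" using Nt that unfolding N_def by simp
    then obtain l where "l \<in> L x" "l < m" using cInf_less_iff[OF L_ne L_bdd] by auto
    hence "m \<in> L x" using L_up by auto
    thus ?thesis unfolding L_def by auto
  qed
  show "G (inverse t *\<^sub>R x) \<le> 1"
  proof (rule ccontr)
    assume "\<not> ?thesis"
    hence e: "G (inverse t *\<^sub>R x) - 1 > 0" by simp
    then obtain d where d: "d > 0" "\<forall>y. dist y (inverse t *\<^sub>R x) < d \<longrightarrow> \<bar>G y - G (inverse t *\<^sub>R x)\<bar> < G (inverse t *\<^sub>R x) - 1"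
      using cont_at by blast
    define m where "m = t + t^2 * d / (2 * (norm x + 1))"
    have nx1: "norm x + 1 > 0" by (smt (verit) norm_ge_zero)
    have "t^2 * d / (2 * (norm x + 1)) > 0" using assms d nx1 by (intro divide_pos_pos mult_pos_pos) (auto simp: add_pos_nonneg)
    hence mt: "m > t" unfolding m_def by linarith
    have mpos: "m > 0" using mt assms by simp
    have "dist (inverse m *\<^sub>R x) (inverse t *\<^sub>R x) = \<bar>inverse m - inverse t\<bar> * norm x"
      by (simp add: dist_norm scaleR_diff_left[symmetric])
    also have "\<bar>inverse m - inverse t\<bar> = (m - t) / (m * t)" using mt assms by (simp add: field_simps)
    also have "\<dots> \<le> (m - t) / t^2" using mt assms
      by (intro divide_left_mono) (auto simp: power2_eq_square intro: mult_right_mono)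
    also have "(m - t) / t^2 = (t^2 * (d / (2 * (norm x + 1)))) / t^2" unfolding m_def by simp
    also have "\<dots> = d / (2 * (norm x + 1))" using assms by simp
    finally have "dist (inverse m *\<^sub>R x) (inverse t *\<^sub>R x) \<le> d / (2 * (norm x + 1)) * norm x"
      by (simp add: mult_right_mono)
    also have "\<dots> = d * (norm x / (2 * (norm x + 1)))" by simp
    also have "\<dots> < d * 1"
    proof (rule mult_strict_left_mono)
      show "norm x / (2 * (norm x + 1)) < 1" using nx1 by (simp add: divide_less_eq)
    qed (use d in auto)
    finally have "\<bar>G (inverse m *\<^sub>R x) - G (inverse t *\<^sub>R x)\<bar> < G (inverse t *\<^sub>R x) - 1" using d by auto
    hence "G (inverse m *\<^sub>R x) > 1" by linarith
    thus False using all[OF mt] by simp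
  qed
qed

lemma scale_eq_aux:
  fixes a b k :: real
  assumes "a \<ge> 0" "b \<ge> 0" "k > 0" "\<And>t. t > 0 \<Longrightarrow> (a \<le> k * t \<longleftrightarrow> b \<le> t)"
  shows "a = k * b"
proof -
  have 1: "a \<le> k * b"
  proof (rule ccontr)
    assume "\<not> ?thesis"
    hence c: "a > k * b" by simp
    define t where "t = (a / k + b) / 2"
    have "a / k > b" using c assms by (simp add: field_simps)
    hence "t > b" "t > 0" using assms unfolding t_def by auto
    hence "a \<le> k * t" using assms(4) by auto
    also have "k * t = (a + k * b) / 2" unfolding t_def using assms by (simp add: field_simps)
    finally show False using c by simp
  qed
  have 2: "b \<le> a / k"
  proof (rule ccontr)
    assume "\<not> ?thesis"
    hence c: "b > a / k" by simp
    define t where "t = (a / k + b) / 2"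
    have "a / k \<ge> 0" using assms by simp
    have aux: "\<And>r::real. r < b \<Longrightarrow> (r + b) / 2 < b" by (simp add: field_simps)
    have tb: "t < b" using aux[OF c] unfolding t_def .
    have aux2: "\<And>r::real. r < b \<Longrightarrow> r < (r + b) / 2" by (simp add: field_simps)
    have "t > a / k" using aux2[OF c] unfolding t_def .
    have "t > 0" using \<open>t > a / k\<close> \<open>a / k \<ge> 0\<close> by linarith
    moreover have "a \<le> k * t" using \<open>t > a / k\<close> assms by (simp add: field_simps)
    ultimately show False using assms(4) tb by auto
  qed
  from 1 2 assms show ?thesis by (simp add: field_simps)
qed

lemma N_scale: "N (c *\<^sub>R x) = \<bar>c\<bar> * N x"
proof (cases "c = 0")
  case True
  have h: "N 0 \<le> t" if "t > 0" for t using char[OF that, of 0] G0 by simp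
  have "N 0 \<le> 0" by (rule field_le_epsilon) (use h in simp)
  with N_nn[of 0] True show ?thesis by simp
next
  case False
  show ?thesis
  proof (rule scale_eq_aux[OF N_nn N_nn])
    show "\<bar>c\<bar> > 0" using False by simp
    fix t :: real assume t: "t > 0"
    have ct: "\<bar>c\<bar> * t > 0" using t False by simp
    have eq: "inverse (\<bar>c\<bar> * t) *\<^sub>R (c *\<^sub>R x) = sgn c *\<^sub>R (inverse t *\<^sub>R x)"
      using False by (simp add: sgn_if)
    have "G (sgn c *\<^sub>R (inverse t *\<^sub>R x)) = G (inverse t *\<^sub>R x)"
    proof (cases "c > 0")
      case True thus ?thesis by simp
    next
      case False
      hence "sgn c = -1" using \<open>c \<noteq> 0\<close> by (simp add: sgn_if)
      thus ?thesis using even[of "inverse t *\<^sub>R x"] by simp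
    qed
    hence "G (inverse (\<bar>c\<bar> * t) *\<^sub>R (c *\<^sub>R x)) = G (inverse t *\<^sub>R x)" unfolding eq .
    thus "N (c *\<^sub>R x) \<le> \<bar>c\<bar> * t \<longleftrightarrow> N x \<le> t" using char[OF ct] char[OF t] by simp
  qed
qed

lemma N_zero: "N x = 0 \<longleftrightarrow> x = 0"
proof
  assume "x = 0" thus "N x = 0" using N_scale[of 0 x] by simp
next
  assume N0: "N x = 0"
  show "x = 0"
  proof (rule ccontr)
    assume nz: "x \<noteq> 0"
    have xx: "x \<bullet> x > 0" using nz by simp
    define t where "t = sqrt (eps * (x \<bullet> x)) / 2"
    have tpos: "t > 0" unfolding t_def using epos xx by simp
    have "G (inverse t *\<^sub>R x) \<le> 1" using char[OF tpos, of x] N0 tpos by simp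
    moreover have "eps * ((inverse t *\<^sub>R x) \<bullet> (inverse t *\<^sub>R x)) = eps * (x \<bullet> x) / t^2"
      by (simp add: power2_eq_square field_simps)
    moreover have "t^2 = eps * (x \<bullet> x) / 4" unfolding t_def using epos xx
      by (simp add: power_divide)
    ultimately have "eps * (x \<bullet> x) / (eps * (x \<bullet> x) / 4) \<le> 1" using coer[of "inverse t *\<^sub>R x"] by simp
    thus False using epos xx by (simp add: field_simps)
  qed
qed

lemma N_triangle: "N (x + y) \<le> N x + N y"
proof (rule field_le_epsilon)
  fix e :: real assume e: "e > 0"
  define a where "a = N x + e/2"
  define b where "b = N y + e/2"
  have apos: "a > 0" "b > 0" unfolding a_def b_def using N_nn[of x] N_nn[of y] e by auto
  have Ga: "G (inverse a *\<^sub>R x) \<le> 1" using char[OF apos(1), of x] unfolding a_def using e by simp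
  have Gb: "G (inverse b *\<^sub>R y) \<le> 1" using char[OF apos(2), of y] unfolding b_def using e by simp
  define u where "u = b / (a + b)"
  have u: "0 \<le> u" "u \<le> 1" unfolding u_def using apos by auto
  have eq: "inverse (a + b) *\<^sub>R (x + y) = (1 - u) *\<^sub>R (inverse a *\<^sub>R x) + u *\<^sub>R (inverse b *\<^sub>R y)"
    unfolding u_def using apos by (simp add: field_simps scaleR_add_right)
  have "G (inverse (a + b) *\<^sub>R (x + y)) \<le> (1 - u) * G (inverse a *\<^sub>R x) + u * G (inverse b *\<^sub>R y)"
    unfolding eq by (rule convex[OF u])
  also have "\<dots> \<le> (1 - u) * 1 + u * 1" using u Ga Gb by (intro add_mono mult_left_mono) auto
  finally have "N (x + y) \<le> a + b" using char[of "a+b" "x+y"] apos by simp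
  thus "N (x + y) \<le> N x + N y + e" unfolding a_def b_def by simp
qed

lemma is_norm_N: "is_norm N"
  unfolding is_norm_def using N_zero N_nn N_scale N_triangle by blast

lemma N_le1: "N x \<le> 1 \<longleftrightarrow> G x \<le> 1" using char[of 1 x] by simp

lemma N_lt1: "N x < 1 \<longleftrightarrow> G x < 1"
proof
  assume a: "N x < 1"
  define t where "t = (N x + 1) / 2"
  have t: "t > 0" "t < 1" "N x \<le> t" unfolding t_def using a N_nn[of x] by auto
  have Gt: "G (inverse t *\<^sub>R x) \<le> 1" using char[OF t(1)] t by simp
  have "G x = G (t *\<^sub>R (inverse t *\<^sub>R x))" using t by simp
  also have "\<dots> \<le> t * G (inverse t *\<^sub>R x)" using t by (intro scale_le) auto
  also have "\<dots> \<le> t * 1" using Gt t by (intro mult_left_mono) auto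
  finally show "G x < 1" using t by simp
next
  assume a: "G x < 1"
  then obtain d where d: "d > 0" "\<forall>y. dist y x < d \<longrightarrow> \<bar>G y - G x\<bar> < 1 - G x"
    using cont_at[of x] by (meson diff_gt_0_iff_gt)
  have nx1: "norm x + 1 > 0" by (smt (verit) norm_ge_zero)
  define m where "m = 1 + d / (2 * (norm x + 1))"
  have "d / (2 * (norm x + 1)) > 0" using d nx1 by simp
  hence m1: "m > 1" unfolding m_def by simp
  have "m *\<^sub>R x - x = (m - 1) *\<^sub>R x" by (simp add: algebra_simps)
  hence "dist (m *\<^sub>R x) x = (m - 1) * norm x" using m1 by (simp add: dist_norm)
  also have "\<dots> = d * (norm x / (2 * (norm x + 1)))" unfolding m_def by simp
  also have "\<dots> < d * 1"
  proof (rule mult_strict_left_mono)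
    show "norm x / (2 * (norm x + 1)) < 1" using nx1 by (simp add: divide_less_eq)
  qed (use d in auto)
  finally have "\<bar>G (m *\<^sub>R x) - G x\<bar> < 1 - G x" using d by auto
  hence "G (m *\<^sub>R x) \<le> 1" by linarith
  hence "N (m *\<^sub>R x) \<le> 1" using N_le1 by simp
  hence "m * N x \<le> 1" using N_scale[of m x] m1 by simp
  hence "N x \<le> 1 / m" using m1 by (simp add: field_simps)
  also have "1 / m < 1" using m1 by simp
  finally show "N x < 1" .
qed

lemma N_eq1: "N x = 1 \<longleftrightarrow> G x = 1"
  using N_le1 N_lt1 by (smt (verit))

lemma N_gt1: "N x > 1 \<longleftrightarrow> G x > 1"
  using N_le1 by (smt (verit))

lemma ball_eq: "unit_ball_N N = {y. G y \<le> 1}" unfolding unit_ball_N_def using N_le1 by auto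
lemma sphere_eq: "unit_sphere_N N = {y. G y = 1}" unfolding unit_sphere_N_def using N_eq1 by auto

lemma strictly_convex: "strictly_convex_norm N"
  unfolding strictly_convex_norm_def
proof (intro allI impI notI)
  fix x y :: "real^4" assume xy: "x \<noteq> y" and seg: "closed_segment x y \<subseteq> unit_sphere_N N"
  have "x \<in> closed_segment x y" "y \<in> closed_segment x y" "midpoint x y \<in> closed_segment x y" by auto
  hence "x \<in> unit_sphere_N N" "y \<in> unit_sphere_N N" "midpoint x y \<in> unit_sphere_N N" using seg by blast+
  hence "G x = 1" "G y = 1" "G (midpoint x y) = 1" using sphere_eq by auto
  thus False using strict[OF xy] by simp
qed

lemma descent:
  assumes Gx: "G x = 1" and gv: "g x \<bullet> v < 0"
  shows "\<exists>t>0. G (x + t *\<^sub>R v) < 1"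
proof -
  define w where "w = - (g x \<bullet> v)"
  define k where "k = \<bar>K v\<bar>"
  have w: "w > 0" using gv unfolding w_def by simp
  have k: "k \<ge> 0" unfolding k_def by simp
  define t where "t = w / (2 * (k + 1))"
  have t: "t > 0" unfolding t_def using w k by simp
  have tk: "t * k \<le> w / 2"
  proof -
    have "t * k = (w / 2) * (k / (k + 1))" unfolding t_def by (simp add: field_simps)
    also have "\<dots> \<le> (w / 2) * 1" using w k by (intro mult_left_mono) auto
    finally show ?thesis by simp
  qed
  have "t^2 * K v \<le> t^2 * k" unfolding k_def by (intro mult_left_mono) auto
  also have "\<dots> = t * (t * k)" by (simp add: power2_eq_square)
  also have "\<dots> \<le> t * (w / 2)" using tk t by (intro mult_left_mono) auto
  finally have "t^2 * K v \<le> t * (w / 2)" .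
  moreover have "G (x + t *\<^sub>R v) \<le> G x + t * (g x \<bullet> v) + t^2 * K v" by (rule up)
  moreover have "t * (g x \<bullet> v) = - (t * w)" unfolding w_def by simp
  moreover have "t * w > 0" using t w by simp
  ultimately have "G (x + t *\<^sub>R v) < 1" using Gx by linarith
  thus ?thesis using t by blast
qed

lemma smooth: "smooth_norm N"
  unfolding smooth_norm_def sphere_eq ball_eq
proof (intro ballI)
  fix x assume "x \<in> {y. G y = 1}"
  hence Gx: "G x = 1" by simp
  define gx where "gx = g x"
  have "G 0 \<ge> G x + g x \<bullet> (0 - x)" by (rule sub)
  hence gxx: "gx \<bullet> x \<ge> 1" using Gx G0 unfolding gx_def by (simp add: inner_minus_right)
  hence gnz: "gx \<noteq> 0" by auto
  define H0 where "H0 = {y. gx \<bullet> y = gx \<bullet> x}"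
  have ex: "supporting_hyperplane {y. G y \<le> 1} x H0"
    unfolding supporting_hyperplane_def
  proof (intro exI conjI ballI)
    show "gx \<noteq> 0" by fact
    show "H0 = {y. gx \<bullet> y = gx \<bullet> x}" by (simp add: H0_def)
    show "x \<in> H0" by (simp add: H0_def)
    fix y assume "y \<in> {y. G y \<le> 1}"
    hence "G y \<le> 1" by simp
    moreover have "G y \<ge> G x + g x \<bullet> (y - x)" by (rule sub)
    ultimately show "gx \<bullet> y \<le> gx \<bullet> x" using Gx unfolding gx_def by (simp add: inner_diff_right)
  qed
  have uniq: "H = H0" if sh: "supporting_hyperplane {y. G y \<le> 1} x H" for H
  proof -
    obtain a c where a: "a \<noteq> 0" "H = {y. a \<bullet> y = c}" "x \<in> H" "\<forall>y\<in>{y. G y \<le> 1}. a \<bullet> y \<le> c"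
      using sh unfolding supporting_hyperplane_def by iprover
    have c: "c = a \<bullet> x" using a(2,3) by simp
    have s1: "a \<bullet> v \<le> 0" if "gx \<bullet> v < 0" for v
    proof -
      have "\<exists>t>0. G (x + t *\<^sub>R v) < 1" using descent[OF Gx] that unfolding gx_def by blast
      then obtain t where t: "t > 0" "G (x + t *\<^sub>R v) < 1" by blast
      hence "a \<bullet> (x + t *\<^sub>R v) \<le> c" using a(4) by simp
      hence "t * (a \<bullet> v) \<le> 0" using c by (simp add: inner_add_right)
      thus ?thesis using t by (simp add: mult_le_0_iff)
    qed
    have s2: "a \<bullet> v \<le> 0" if "gx \<bullet> v \<le> 0" for v
    proof (rule field_le_epsilon)
      fix e :: real assume e: "e > 0"
      define d where "d = e / (\<bar>a \<bullet> gx\<bar> + 1)"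
      have d: "d > 0" unfolding d_def using e by (simp add: add_nonneg_pos)
      have "gx \<bullet> gx > 0" using gnz by simp
      hence "d * (gx \<bullet> gx) > 0" using d by simp
      hence "gx \<bullet> (v - d *\<^sub>R gx) < 0" using that by (simp add: inner_diff_right)
      hence "a \<bullet> (v - d *\<^sub>R gx) \<le> 0" by (rule s1)
      hence "a \<bullet> v \<le> d * (a \<bullet> gx)" by (simp add: inner_diff_right)
      also have "\<dots> \<le> d * \<bar>a \<bullet> gx\<bar>" using d by (intro mult_left_mono) auto
      also have "\<dots> \<le> e"
      proof -
        have "d * \<bar>a \<bullet> gx\<bar> = e * (\<bar>a \<bullet> gx\<bar> / (\<bar>a \<bullet> gx\<bar> + 1))" unfolding d_def by simp
        also have "\<dots> \<le> e * 1" using e by (intro mult_left_mono) auto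
        finally show ?thesis by simp
      qed
      finally show "a \<bullet> v \<le> 0 + e" by simp
    qed
    define mu where "mu = (a \<bullet> gx) / (gx \<bullet> gx)"
    define w where "w = a - mu *\<^sub>R gx"
    have gg: "gx \<bullet> gx > 0" using gnz by simp
    have gw: "gx \<bullet> w = 0" unfolding w_def mu_def using gg by (simp add: inner_diff_right inner_commute)
    have "a \<bullet> w \<le> 0" using s2[of w] gw by simp
    moreover have "a \<bullet> (- w) \<le> 0" using s2[of "-w"] gw by simp
    ultimately have aw: "a \<bullet> w = 0" by simp
    have "w \<bullet> w = a \<bullet> w - mu * (gx \<bullet> w)" unfolding w_def
      by (simp add: inner_diff_left inner_diff_right inner_commute algebra_simps)
    hence "w \<bullet> w = 0" using aw gw by simp
    hence "w = 0" by simp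
    hence aeq: "a = mu *\<^sub>R gx" unfolding w_def by simp
    have "a \<bullet> (- gx) \<le> 0" using s1[of "-gx"] gg by simp
    hence "mu * (gx \<bullet> gx) \<ge> 0" using aeq by simp
    hence "mu \<ge> 0" using gg by (simp add: zero_le_mult_iff)
    moreover have "mu \<noteq> 0" using a(1) aeq by auto
    ultimately have mu: "mu > 0" by simp
    show "H = H0" unfolding a(2) H0_def c aeq using mu by auto
  qed
  show "\<exists>!H. supporting_hyperplane {y. G y \<le> 1} x H"
    using ex uniq by blast
qed

end



definition hh :: "real \<Rightarrow> real" where "hh s = (max 0 s)^2"
definition dh :: "real \<Rightarrow> real" where "dh s = 2 * max 0 s"

lemma hh_nn: "hh s \<ge> 0" by (simp add: hh_def)
lemma hh_neg: "s \<le> 0 \<Longrightarrow> hh s = 0" by (simp add: hh_def)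
lemma hh_pos: "s \<ge> 0 \<Longrightarrow> hh s = s^2" by (simp add: hh_def)

lemma hh_lower: "hh (s + d) \<ge> hh s + dh s * d"
proof (cases "s \<ge> 0")
  case True
  show ?thesis
  proof (cases "s + d \<ge> 0")
    case True
    have "(s + d)^2 = s^2 + 2 * s * d + d^2" by (simp add: power2_eq_square algebra_simps)
    moreover have "d^2 \<ge> 0" by simp
    ultimately show ?thesis using True \<open>s \<ge> 0\<close> by (simp add: hh_def dh_def max_def)
  next
    case False
    have "s * (s + 2 * d) \<le> 0" using False \<open>s \<ge> 0\<close> by (intro mult_nonneg_nonpos) auto
    hence "s^2 + 2 * s * d \<le> 0" by (simp add: power2_eq_square algebra_simps)
    thus ?thesis using False \<open>s \<ge> 0\<close> by (simp add: hh_def dh_def max_def)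
  qed
next
  case False
  thus ?thesis by (simp add: hh_def dh_def max_def)
qed

lemma hh_upper: "hh (s + d) \<le> hh s + dh s * d + d^2"
proof (cases "s \<ge> 0")
  case True
  have e: "(s + d)^2 = s^2 + 2 * s * d + d^2" by (simp add: power2_eq_square algebra_simps)
  show ?thesis
  proof (cases "s + d \<ge> 0")
    case True
    thus ?thesis using e \<open>s \<ge> 0\<close> by (simp add: hh_def dh_def max_def)
  next
    case False
    have "(s + d)^2 \<ge> 0" by simp
    thus ?thesis using e False \<open>s \<ge> 0\<close> by (simp add: hh_def dh_def max_def)
  qed
next
  case False
  show ?thesis
  proof (cases "s + d \<ge> 0")
    case True
    have "(s + d)^2 \<le> d^2" using True False by (intro power_mono) auto
    thus ?thesis using True False by (simp add: hh_def dh_def max_def)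
  next
    case c2: False
    thus ?thesis using False by (simp add: hh_def dh_def max_def)
  qed
qed

lemma hh_mid: "hh ((s + r)/2) \<le> (hh s + hh r)/2"
proof -
  define D where "D = dh ((s + r)/2)"
  define E where "E = D * ((s - r)/2)"
  define M where "M = hh ((s + r)/2)"
  have 1: "hh s \<ge> M + E"
    using hh_lower[of "(s + r)/2" "(s - r)/2"] unfolding D_def E_def M_def by (simp add: field_simps)
  have 2: "hh r \<ge> M - E"
    using hh_lower[of "(s + r)/2" "(r - s)/2"] unfolding D_def E_def M_def by (simp add: field_simps)
  have "2 * M \<le> hh s + hh r" using 1 2 by linarith
  thus ?thesis unfolding M_def by (simp add: field_simps)
qed

locale conc =
  fixes P :: "'p set" and b :: "'p \<Rightarrow> real^4" and c :: "'p \<Rightarrow> real" and tau :: real and eps :: real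
  assumes finP: "finite P" and cnn: "\<And>p. p \<in> P \<Longrightarrow> c p \<ge> 0" and tau: "tau \<ge> 0" and epos: "eps > 0"
begin

definition H1 where "H1 x = (\<Sum>p\<in>P. c p * (hh (b p \<bullet> x - tau) + hh (- (b p \<bullet> x) - tau)))"
definition Gc where "Gc x = eps * (x \<bullet> x) + H1 x"
definition gc where "gc x = (2 * eps) *\<^sub>R x + (\<Sum>p\<in>P. (c p * (dh (b p \<bullet> x - tau) - dh (- (b p \<bullet> x) - tau))) *\<^sub>R b p)"
definition Kc where "Kc v = eps * (v \<bullet> v) + (\<Sum>p\<in>P. c p * 2 * (b p \<bullet> v)^2)"

lemma inner_gc: "gc x \<bullet> d = 2 * eps * (x \<bullet> d) + (\<Sum>p\<in>P. c p * (dh (b p \<bullet> x - tau) - dh (- (b p \<bullet> x) - tau)) * (b p \<bullet> d))"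
  by (simp add: gc_def inner_add_left inner_sum_left)

lemma sub': "Gc (x + d) \<ge> Gc x + gc x \<bullet> d"
proof -
  have t: "c p * (hh (b p \<bullet> (x + d) - tau) + hh (- (b p \<bullet> (x + d)) - tau)) \<ge>
      c p * (hh (b p \<bullet> x - tau) + hh (- (b p \<bullet> x) - tau)) + c p * (dh (b p \<bullet> x - tau) - dh (- (b p \<bullet> x) - tau)) * (b p \<bullet> d)"
    if "p \<in> P" for p
  proof -
    have 1: "hh (b p \<bullet> (x + d) - tau) \<ge> hh (b p \<bullet> x - tau) + dh (b p \<bullet> x - tau) * (b p \<bullet> d)"
      using hh_lower[of "b p \<bullet> x - tau" "b p \<bullet> d"] by (simp add: inner_add_right algebra_simps)
    have 2: "hh (- (b p \<bullet> (x + d)) - tau) \<ge> hh (- (b p \<bullet> x) - tau) + dh (- (b p \<bullet> x) - tau) * (- (b p \<bullet> d))"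
      using hh_lower[of "- (b p \<bullet> x) - tau" "- (b p \<bullet> d)"] by (simp add: inner_add_right algebra_simps)
    have "c p * (hh (b p \<bullet> x - tau) + dh (b p \<bullet> x - tau) * (b p \<bullet> d) + (hh (- (b p \<bullet> x) - tau) + dh (- (b p \<bullet> x) - tau) * (- (b p \<bullet> d))))
       \<le> c p * (hh (b p \<bullet> (x + d) - tau) + hh (- (b p \<bullet> (x + d)) - tau))"
      using 1 2 cnn[OF that] by (intro mult_left_mono) auto
    thus ?thesis by (simp add: algebra_simps)
  qed
  have "H1 (x + d) \<ge> (\<Sum>p\<in>P. c p * (hh (b p \<bullet> x - tau) + hh (- (b p \<bullet> x) - tau)) + c p * (dh (b p \<bullet> x - tau) - dh (- (b p \<bullet> x) - tau)) * (b p \<bullet> d))"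
    unfolding H1_def by (rule sum_mono) (use t in auto)
  hence h: "H1 (x + d) \<ge> H1 x + (\<Sum>p\<in>P. c p * (dh (b p \<bullet> x - tau) - dh (- (b p \<bullet> x) - tau)) * (b p \<bullet> d))"
    unfolding H1_def by (simp add: sum.distrib)
  have "(x + d) \<bullet> (x + d) = x \<bullet> x + 2 * (x \<bullet> d) + d \<bullet> d" by (simp add: inner_add_left inner_add_right inner_commute)
  moreover have "eps * (d \<bullet> d) \<ge> 0" using epos by simp
  ultimately have e: "eps * ((x + d) \<bullet> (x + d)) \<ge> eps * (x \<bullet> x) + 2 * eps * (x \<bullet> d)" by (simp add: algebra_simps)
  show ?thesis unfolding Gc_def inner_gc using h e by linarith
qed

lemma sub: "Gc y \<ge> Gc x + gc x \<bullet> (y - x)"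
  using sub'[of x "y - x"] by simp

lemma up: "Gc (x + t *\<^sub>R v) \<le> Gc x + t * (gc x \<bullet> v) + t^2 * Kc v"
proof -
  define d where "d = t *\<^sub>R v"
  define A where "A p = c p * (hh (b p \<bullet> x - tau) + hh (- (b p \<bullet> x) - tau))" for p
  define B where "B p = c p * (dh (b p \<bullet> x - tau) - dh (- (b p \<bullet> x) - tau)) * (b p \<bullet> v)" for p
  define C where "C p = c p * 2 * (b p \<bullet> v)^2" for p
  have t: "c p * (hh (b p \<bullet> (x + d) - tau) + hh (- (b p \<bullet> (x + d)) - tau)) \<le> A p + t * B p + t^2 * C p"
    if "p \<in> P" for p
  proof -
    have bd: "b p \<bullet> d = t * (b p \<bullet> v)" unfolding d_def by simp
    have 1: "hh (b p \<bullet> (x + d) - tau) \<le> hh (b p \<bullet> x - tau) + dh (b p \<bullet> x - tau) * (b p \<bullet> d) + (b p \<bullet> d)^2"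
      using hh_upper[of "b p \<bullet> x - tau" "b p \<bullet> d"] by (simp add: inner_add_right algebra_simps)
    have 2: "hh (- (b p \<bullet> (x + d)) - tau) \<le> hh (- (b p \<bullet> x) - tau) + dh (- (b p \<bullet> x) - tau) * (- (b p \<bullet> d)) + (b p \<bullet> d)^2"
      using hh_upper[of "- (b p \<bullet> x) - tau" "- (b p \<bullet> d)"] by (simp add: inner_add_right algebra_simps)
    have "c p * (hh (b p \<bullet> (x + d) - tau) + hh (- (b p \<bullet> (x + d)) - tau)) \<le>
       c p * (hh (b p \<bullet> x - tau) + dh (b p \<bullet> x - tau) * (b p \<bullet> d) + (b p \<bullet> d)^2 + (hh (- (b p \<bullet> x) - tau) + dh (- (b p \<bullet> x) - tau) * (- (b p \<bullet> d)) + (b p \<bullet> d)^2))"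
      using 1 2 cnn[OF that] by (intro mult_left_mono) auto
    also have "\<dots> = A p + t * B p + t^2 * C p"
      unfolding A_def B_def C_def bd by (simp add: power_mult_distrib algebra_simps)
    finally show ?thesis .
  qed
  have "H1 (x + d) \<le> (\<Sum>p\<in>P. A p + t * B p + t^2 * C p)"
    unfolding H1_def by (rule sum_mono) (use t in auto)
  also have "\<dots> = (\<Sum>p\<in>P. A p) + t * (\<Sum>p\<in>P. B p) + t^2 * (\<Sum>p\<in>P. C p)"
    by (simp add: sum.distrib sum_distrib_left)
  finally have h: "H1 (x + d) \<le> H1 x + t * (\<Sum>p\<in>P. B p) + t^2 * (\<Sum>p\<in>P. C p)"
    unfolding H1_def A_def .
  have e: "eps * ((x + d) \<bullet> (x + d)) = eps * (x \<bullet> x) + t * (2 * eps * (x \<bullet> v)) + t^2 * (eps * (v \<bullet> v))"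
    unfolding d_def by (simp add: inner_add_left inner_add_right inner_commute power2_eq_square algebra_simps)
  have g: "gc x \<bullet> v = 2 * eps * (x \<bullet> v) + (\<Sum>p\<in>P. B p)" unfolding inner_gc B_def ..
  have k: "Kc v = eps * (v \<bullet> v) + (\<Sum>p\<in>P. C p)" unfolding Kc_def C_def ..
  have "Gc (x + d) \<le> Gc x + t * (gc x \<bullet> v) + t^2 * Kc v"
    unfolding Gc_def g k using h e by (simp add: distrib_left)
  thus ?thesis unfolding d_def .
qed

lemma even: "Gc (- x) = Gc x"
  unfolding Gc_def H1_def by (simp add: add.commute)

lemma G0: "Gc 0 = 0"
  unfolding Gc_def H1_def using tau by (simp add: hh_neg)

lemma H1_nn: "H1 x \<ge> 0"
  unfolding H1_def by (rule sum_nonneg) (use cnn hh_nn in auto)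

lemma coer: "eps * (x \<bullet> x) \<le> Gc x"
  unfolding Gc_def using H1_nn[of x] by simp

lemma cont: "continuous_on UNIV Gc"
  unfolding Gc_def H1_def hh_def by (intro continuous_intros)

lemma strict: assumes "x \<noteq> y" shows "Gc (midpoint x y) < (Gc x + Gc y)/2"
proof -
  define m where "m = midpoint x y"
  have m: "m = (1/2) *\<^sub>R (x + y)" unfolding m_def midpoint_def by simp
  have bm: "b p \<bullet> m = (b p \<bullet> x + b p \<bullet> y) / 2" for p unfolding m by (simp add: inner_add_right)
  have t: "2 * (c p * (hh (b p \<bullet> m - tau) + hh (- (b p \<bullet> m) - tau))) \<le>
     c p * (hh (b p \<bullet> x - tau) + hh (- (b p \<bullet> x) - tau)) + c p * (hh (b p \<bullet> y - tau) + hh (- (b p \<bullet> y) - tau))"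
    if "p \<in> P" for p
  proof -
    have 1: "hh (b p \<bullet> m - tau) \<le> (hh (b p \<bullet> x - tau) + hh (b p \<bullet> y - tau)) / 2"
      using hh_mid[of "b p \<bullet> x - tau" "b p \<bullet> y - tau"] unfolding bm by (simp add: field_simps)
    have 2: "hh (- (b p \<bullet> m) - tau) \<le> (hh (- (b p \<bullet> x) - tau) + hh (- (b p \<bullet> y) - tau)) / 2"
      using hh_mid[of "- (b p \<bullet> x) - tau" "- (b p \<bullet> y) - tau"] unfolding bm by (simp add: field_simps)
    have "c p * (2 * (hh (b p \<bullet> m - tau) + hh (- (b p \<bullet> m) - tau))) \<le>
       c p * ((hh (b p \<bullet> x - tau) + hh (- (b p \<bullet> x) - tau)) + (hh (b p \<bullet> y - tau) + hh (- (b p \<bullet> y) - tau)))"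
      using 1 2 cnn[OF that] by (intro mult_left_mono) (auto simp: field_simps)
    thus ?thesis by (simp add: algebra_simps)
  qed
  have "(\<Sum>p\<in>P. 2 * (c p * (hh (b p \<bullet> m - tau) + hh (- (b p \<bullet> m) - tau)))) \<le>
     (\<Sum>p\<in>P. c p * (hh (b p \<bullet> x - tau) + hh (- (b p \<bullet> x) - tau)) + c p * (hh (b p \<bullet> y - tau) + hh (- (b p \<bullet> y) - tau)))"
    by (rule sum_mono) (use t in auto)
  hence h: "2 * H1 m \<le> H1 x + H1 y" unfolding H1_def by (simp add: sum.distrib sum_distrib_left)
  have "x - y \<noteq> 0" using assms by simp
  hence pos: "(x - y) \<bullet> (x - y) > 0" by simp
  have "4 * (m \<bullet> m) = 2 * (x \<bullet> x) + 2 * (y \<bullet> y) - (x - y) \<bullet> (x - y)"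
    unfolding m by (simp add: inner_add_left inner_add_right inner_diff_left inner_diff_right inner_commute algebra_simps)
  hence "4 * (eps * (m \<bullet> m)) = 2 * (eps * (x \<bullet> x)) + 2 * (eps * (y \<bullet> y)) - eps * ((x - y) \<bullet> (x - y))"
    by (simp add: algebra_simps)
  moreover have "eps * ((x - y) \<bullet> (x - y)) > 0" using epos pos by simp
  ultimately have e: "2 * (eps * (m \<bullet> m)) < eps * (x \<bullet> x) + eps * (y \<bullet> y)" by linarith
  have "2 * Gc m < Gc x + Gc y" unfolding Gc_def distrib_left using h e by linarith
  thus ?thesis unfolding m_def by (simp add: field_simps)
qed

sublocale gfun Gc gc Kc eps
  apply unfold_locales
  apply (rule sub)
  apply (rule up)
  apply (rule even)
  apply (rule G0)
  apply (rule coer)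
  apply (rule epos)
  apply (rule cont)
  apply (erule strict)
  done

end




definition vec4 :: "real \<Rightarrow> real \<Rightarrow> real \<Rightarrow> real \<Rightarrow> real^4" where
  "vec4 a b c d = (\<chi> i. if i = 1 then a else if i = 2 then b else if i = 3 then c else d)"

lemma vec4_inner: "vec4 a b c d \<bullet> vec4 e f g h = a * e + b * f + c * g + d * h"
  unfolding vec4_def inner_vec_def sum_4 by simp

lemma vec4_1: "vec4 a b c d $ 1 = a" unfolding vec4_def by simp

definition gam :: "real \<Rightarrow> real^4" where "gam u = vec4 u (u^2) (u^3) (u^4)"
definition av :: "real \<Rightarrow> real \<Rightarrow> real^4" where
  "av s t = vec4 (2*(s+t)*(s*t)) (- ((s+t)^2 + 2*(s*t))) (2*(s+t)) (-1)"

lemma av_gam: "av s t \<bullet> gam u = (s*t)^2 - (u-s)^2*(u-t)^2"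
  unfolding av_def gam_def vec4_inner by (simp add: power2_eq_square power3_eq_cube power4_eq_xxxx algebra_simps)

lemma gam_inj: "gam u = gam v \<Longrightarrow> u = v"
  using arg_cong[of "gam u" "gam v" "\<lambda>x. x $ 1"] unfolding gam_def vec4_1 by simp

lemma gam_norm: "gam u \<bullet> gam u = u^2 + (u^2)^2 + (u^3)^2 + (u^4)^2"
  unfolding gam_def vec4_inner by (simp add: power2_eq_square)

lemma gam_bound: assumes "0 \<le> u" "u \<le> 2" shows "gam u \<bullet> gam u \<le> 340"
proof -
  have "u^2 \<le> 2^2" "(u^2)^2 \<le> (2^2)^2" "(u^3)^2 \<le> (2^3)^2" "(u^4)^2 \<le> (2^4)^2"
    using assms by (intro power_mono zero_le_power; simp)+
  thus ?thesis unfolding gam_norm by simp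
qed


definition qq :: "real \<Rightarrow> real \<Rightarrow> real \<Rightarrow> real" where "qq s t w = (w-s)^2*(w-t)^2"
definition bv :: "real \<times> real \<Rightarrow> real^4" where "bv p = inverse ((fst p * snd p)^2) *\<^sub>R av (fst p) (snd p)"
definition mid :: "real \<times> real \<Rightarrow> real^4" where "mid p = (1/2) *\<^sub>R (gam (fst p) + gam (snd p))"

lemma bv_mid: assumes "s * t \<noteq> 0"
  shows "bv (s,t) \<bullet> mid (u,v) = 1 - (qq s t u + qq s t v) / (2 * (s*t)^2)"
proof -
  have "bv (s,t) \<bullet> mid (u,v) = inverse ((s*t)^2) * ((1/2) * (av s t \<bullet> gam u + av s t \<bullet> gam v))"
    unfolding bv_def mid_def by (simp add: inner_add_right algebra_simps)
  also have "\<dots> = inverse ((s*t)^2) * ((1/2) * (2 * (s*t)^2 - (qq s t u + qq s t v)))"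
    unfolding av_gam qq_def by simp
  also have "\<dots> = 1 - (qq s t u + qq s t v) / (2 * (s*t)^2)"
    using assms by (simp add: field_simps)
  finally show ?thesis .
qed

lemma sq_le1: fixes w s :: real assumes "1 \<le> w" "w \<le> 2" "1 \<le> s" "s \<le> 2" shows "(w - s)^2 \<le> 1"
proof -
  have "\<bar>w - s\<bar> \<le> 1" using assms by linarith
  thus ?thesis by (simp add: abs_square_le_1)
qed

lemma qq_le1: assumes "1 \<le> w" "w \<le> 2" "1 \<le> s" "s \<le> 2" "1 \<le> t" "t \<le> 2" shows "qq s t w \<le> 1"
  unfolding qq_def using sq_le1[of w s] sq_le1[of w t] assms by (intro mult_le_one) auto

lemma qq_nn: "qq s t w \<ge> 0" unfolding qq_def by simp

lemma sq_ge: fixes w s d :: real assumes "\<bar>w - s\<bar> \<ge> d" "d \<ge> 0" shows "(w - s)^2 \<ge> d^2"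
proof -
  have "d^2 \<le> \<bar>w - s\<bar>^2" using assms by (intro power_mono) auto
  thus ?thesis by simp
qed

lemma qq_ge: fixes w s t d :: real assumes "\<bar>w - s\<bar> \<ge> d" "\<bar>w - t\<bar> \<ge> d" "d \<ge> 0" shows "qq s t w \<ge> d^4"
proof -
  have "d^2 * d^2 \<le> (w-s)^2*(w-t)^2" using sq_ge[OF assms(1,3)] sq_ge[OF assms(2,3)]
    by (intro mult_mono) auto
  thus ?thesis unfolding qq_def by (simp add: power2_eq_square power4_eq_xxxx)
qed

locale config =
  fixes T :: "real set" and d :: real
  assumes finT: "finite T" and T12: "\<And>u. u \<in> T \<Longrightarrow> 1 \<le> u \<and> u \<le> 2"
    and d: "0 < d" "d \<le> 1" and gap: "\<And>u v. u \<in> T \<Longrightarrow> v \<in> T \<Longrightarrow> u \<noteq> v \<Longrightarrow> \<bar>u - v\<bar> \<ge> d"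
begin

definition PP where "PP = {p. fst p \<in> T \<and> snd p \<in> T \<and> fst p < snd p}"
definition tau where "tau = 1 - d^4 / 32"

lemma finPP: "finite PP"
proof -
  have "PP \<subseteq> T \<times> T" unfolding PP_def by auto
  thus ?thesis using finT by (auto intro: finite_subset)
qed

lemma tau_bnd: "0 \<le> tau" "tau < 1"
proof -
  have "d^4 \<le> 1" using d by (simp add: power_le_one)
  moreover have "d^4 > 0" using d by simp
  ultimately show "0 \<le> tau" "tau < 1" unfolding tau_def by auto
qed

lemma st_bounds: assumes "s \<in> T" "t \<in> T" shows "1 \<le> (s*t)^2" "(s*t)^2 \<le> 16"
proof -
  have s: "1 \<le> s" "s \<le> 2" and t: "1 \<le> t" "t \<le> 2" using T12 assms by auto
  have "1 \<le> s * t" using s t by (metis mult_mono' mult_1 order.trans zero_le_one)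
  thus "1 \<le> (s*t)^2" by (simp add: one_le_power)
  have "s * t \<le> 2 * 2" using s t by (intro mult_mono) auto
  hence "(s*t)^2 \<le> 4^2" using \<open>1 \<le> s*t\<close> by (intro power_mono) auto
  thus "(s*t)^2 \<le> 16" by simp
qed

lemma own: assumes "p \<in> PP" shows "bv p \<bullet> mid p = 1"
proof -
  obtain s t where p: "p = (s,t)" by (cases p)
  have "s \<in> T" "t \<in> T" using assms p unfolding PP_def by auto
  hence "(s*t)^2 \<ge> 1" using st_bounds by auto
  hence "s * t \<noteq> 0" by auto
  thus ?thesis unfolding p using bv_mid by (simp add: qq_def)
qed

lemma neg: assumes "p \<in> PP" "q \<in> PP" shows "- (bv p \<bullet> mid q) \<le> 0"
proof -
  obtain s t where p: "p = (s,t)" by (cases p)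
  obtain u v where q: "q = (u,v)" by (cases q)
  have T: "s \<in> T" "t \<in> T" "u \<in> T" "v \<in> T" using assms p q unfolding PP_def by auto
  have a: "(s*t)^2 \<ge> 1" using st_bounds T by auto
  hence nz: "s * t \<noteq> 0" by auto
  have "qq s t u \<le> 1" "qq s t v \<le> 1" using qq_le1 T12 T by blast+
  hence "qq s t u + qq s t v \<le> 2 * (s*t)^2" using a by linarith
  hence "(qq s t u + qq s t v) / (2 * (s*t)^2) \<le> 1" using a by (simp add: divide_le_eq)
  thus ?thesis unfolding p q bv_mid[OF nz] by simp
qed

lemma other: assumes "p \<in> PP" "q \<in> PP" "p \<noteq> q" shows "bv p \<bullet> mid q \<le> tau"
proof -
  obtain s t where p: "p = (s,t)" by (cases p)
  obtain u v where q: "q = (u,v)" by (cases q)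
  have T: "s \<in> T" "t \<in> T" "u \<in> T" "v \<in> T" and st: "s < t" and uv: "u < v"
    using assms p q unfolding PP_def by auto
  have a: "(s*t)^2 \<ge> 1" "(s*t)^2 \<le> 16" using st_bounds T by auto
  hence nz: "s * t \<noteq> 0" by auto
  have "\<exists>w\<in>{u,v}. w \<noteq> s \<and> w \<noteq> t"
  proof (rule ccontr)
    assume "\<not> ?thesis"
    hence "u = s \<or> u = t" "v = s \<or> v = t" by auto
    thus False using st uv assms(3) p q by auto
  qed
  then obtain w where w: "w \<in> {u,v}" "w \<noteq> s" "w \<noteq> t" by blast
  have wT: "w \<in> T" using w T by auto
  have "qq s t w \<ge> d^4" using gap[OF wT T(1) w(2)] gap[OF wT T(2) w(3)] d by (intro qq_ge) auto
  moreover have "qq s t u \<ge> 0" "qq s t v \<ge> 0" by (rule qq_nn)+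
  ultimately have X: "qq s t u + qq s t v \<ge> d^4" using w(1) by auto
  have "d^4 / 32 = d^4 / (2 * 16)" by simp
  also have "\<dots> \<le> d^4 / (2 * (s*t)^2)" using a d by (intro divide_left_mono) auto
  also have "\<dots> \<le> (qq s t u + qq s t v) / (2 * (s*t)^2)" using X a by (intro divide_right_mono) auto
  finally have "d^4 / 32 \<le> (qq s t u + qq s t v) / (2 * (s*t)^2)" .
  thus ?thesis unfolding p q bv_mid[OF nz] tau_def by linarith
qed

lemma mid_bound: assumes "q \<in> PP" shows "mid q \<bullet> mid q \<le> 340"
proof -
  obtain u v where q: "q = (u,v)" by (cases q)
  have T: "u \<in> T" "v \<in> T" using assms q unfolding PP_def by auto
  have b: "gam u \<bullet> gam u \<le> 340" "gam v \<bullet> gam v \<le> 340" using gam_bound T12 T by (meson order.trans zero_le_one)+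
  have "0 \<le> (gam u - gam v) \<bullet> (gam u - gam v)" by simp
  hence "4 * (mid q \<bullet> mid q) \<le> 2 * (gam u \<bullet> gam u) + 2 * (gam v \<bullet> gam v)"
    unfolding q mid_def by (simp add: inner_add_left inner_add_right inner_diff_left inner_diff_right inner_commute algebra_simps)
  thus ?thesis using b by linarith
qed


definition eps :: real where "eps = 1/1000"
definition cc where "cc q = (1 - eps * (mid q \<bullet> mid q)) / (1 - tau)^2"

lemma cc_nn: assumes "q \<in> PP" shows "cc q \<ge> 0"
proof -
  have "eps * (mid q \<bullet> mid q) \<le> eps * 340" using mid_bound[OF assms] by (simp add: eps_def)
  hence "1 - eps * (mid q \<bullet> mid q) \<ge> 0" by (simp add: eps_def)
  thus ?thesis unfolding cc_def by simp
qed

sublocale conc PP bv cc tau eps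
  by unfold_locales (auto simp: finPP cc_nn tau_bnd eps_def)

lemma Gc_mid: assumes q: "q \<in> PP" shows "Gc (mid q) = 1"
proof -
  have tm: "cc p * (hh (bv p \<bullet> mid q - tau) + hh (- (bv p \<bullet> mid q) - tau)) =
      (if p = q then cc q * (1 - tau)^2 else 0)" if p: "p \<in> PP" for p
  proof (cases "p = q")
    case True
    have "hh (1 - tau) = (1 - tau)^2" using tau_bnd by (intro hh_pos) auto
    moreover have "hh (- 1 - tau) = 0" using tau_bnd by (intro hh_neg) auto
    ultimately show ?thesis using True own[OF q] by simp
  next
    case False
    have "hh (bv p \<bullet> mid q - tau) = 0" using other[OF p q False] by (intro hh_neg) auto
    moreover have "hh (- (bv p \<bullet> mid q) - tau) = 0" using neg[OF p q] tau_bnd by (intro hh_neg) auto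
    ultimately show ?thesis using False by simp
  qed
  have "H1 (mid q) = (\<Sum>p\<in>PP. if p = q then cc q * (1 - tau)^2 else 0)"
    unfolding H1_def using tm by (rule sum.cong[OF refl])
  also have "\<dots> = cc q * (1 - tau)^2" using q finPP by simp
  also have "\<dots> = 1 - eps * (mid q \<bullet> mid q)" unfolding cc_def using tau_bnd by simp
  finally show ?thesis unfolding Gc_def by simp
qed

lemma mid_of_pts: assumes "u \<in> T" "v \<in> T" "gam u \<noteq> gam v"
  shows "Gc ((1/2) *\<^sub>R (gam u + gam v)) = 1"
proof -
  have uv: "u \<noteq> v" using assms by auto
  show ?thesis
  proof (cases "u < v")
    case True
    hence "(u,v) \<in> PP" using assms unfolding PP_def by auto
    thus ?thesis using Gc_mid unfolding mid_def by fastforce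
  next
    case False
    hence "(v,u) \<in> PP" using assms uv unfolding PP_def by auto
    hence "Gc (mid (v,u)) = 1" by (rule Gc_mid)
    thus ?thesis unfolding mid_def by (simp add: add.commute)
  qed
qed

lemma main_config: "\<exists>N. is_norm N \<and> smooth_norm N \<and> strictly_convex_norm N \<and>
   (\<exists>S. M_set N S \<and> finite S \<and> card T \<le> card S + 1)"
proof (intro exI conjI)
  show "is_norm N" by (rule is_norm_N)
  show "smooth_norm N" by (rule smooth)
  show "strictly_convex_norm N" by (rule strictly_convex)
  define A where "A = gam ` T"
  define S where "S = {x \<in> A. Gc x > 1}"
  have finA: "finite A" unfolding A_def using finT by simp
  show "finite S" unfolding S_def using finA by simp
  have midA: "Gc ((1/2) *\<^sub>R (x + y)) = 1" if "x \<in> A" "y \<in> A" "x \<noteq> y" for x y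
    using that mid_of_pts unfolding A_def by auto
  show "M_set N S" unfolding M_set_def
  proof (intro conjI ballI)
    fix w assume "w \<in> midpoint_set S"
    then obtain x y where "w = (1/2) *\<^sub>R (x + y)" "x \<in> S" "y \<in> S" "x \<noteq> y" unfolding midpoint_set_def by blast
    hence "Gc w = 1" using midA unfolding S_def by auto
    thus "N w = 1" using N_eq1 by simp
  next
    fix x assume "x \<in> S"
    thus "N x > 1" using N_gt1 unfolding S_def by simp
  qed
  have "card (A - S) \<le> Suc 0"
  proof (subst card_le_Suc0_iff_eq)
    show "finite (A - S)" using finA by simp
    show "\<forall>a1\<in>A - S. \<forall>a2\<in>A - S. a1 = a2"
    proof (intro ballI, rule ccontr)
      fix x y assume x: "x \<in> A - S" and y: "y \<in> A - S" and xy: "x \<noteq> y"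
      have "Gc x \<le> 1" "Gc y \<le> 1" using x y unfolding S_def by auto
      moreover have "Gc (midpoint x y) < (Gc x + Gc y)/2" using strict[OF xy] .
      moreover have "midpoint x y = (1/2) *\<^sub>R (x + y)" unfolding midpoint_def by simp
      moreover have "Gc ((1/2) *\<^sub>R (x + y)) = 1" using midA x y xy by auto
      ultimately show False by (simp add: field_simps)
    qed
  qed
  moreover have "card A \<le> card S + card (A - S)"
  proof -
    have "A = S \<union> (A - S)" unfolding S_def by auto
    hence "card A = card (S \<union> (A - S))" by simp
    also have "\<dots> \<le> card S + card (A - S)" by (rule card_Un_le)
    finally show ?thesis .
  qed
  moreover have "card A = card T" unfolding A_def
    by (rule card_image) (meson gam_inj inj_onI)
  ultimately show "card T \<le> card S + 1" by simp
qed

end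




lemma m_val_ge: assumes "M_set N S" "finite S" "n \<le> card S" shows "m_val N \<ge> enat n"
proof (cases "\<exists>k::nat. (\<exists>S. M_set N S \<and> finite S \<and> card S = k) \<and>
                 (\<forall>S. M_set N S \<longrightarrow> finite S \<and> card S \<le> k)")
  case True
  then obtain k where k: "\<forall>S. M_set N S \<longrightarrow> finite S \<and> card S \<le> k" by blast
  have "card S \<le> (GREATEST k. \<exists>S. M_set N S \<and> finite S \<and> card S = k)"
    by (rule Greatest_le_nat[where b = k]) (use assms k in auto)
  thus ?thesis unfolding m_val_def by (subst if_P[OF True]) (use assms in simp)
next
  case False
  show ?thesis unfolding m_val_def by (subst if_not_P[OF False]) simp
qed

theorem theorem5:
  fixes n :: nat
  assumes "n \<ge> 1"
  shows "\<exists>N :: real^4 \<Rightarrow> real. is_norm N \<and> smooth_norm N \<and> strictly_convex_norm N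
           \<and> m_val N \<ge> enat n"
proof -
  define tt where "tt i = 1 + real i / (real n + 1)" for i :: nat
  define T where "T = tt ` {0..n}"
  define d where "d = 1 / (real n + 1)"
  have n1: "real n + 1 > 0" by simp
  have tt_diff: "tt i - tt j = (real i - real j) / (real n + 1)" for i j
    unfolding tt_def by (simp add: diff_divide_distrib)
  have inj: "inj_on tt {0..n}"
  proof (rule inj_onI)
    fix i j assume "tt i = tt j"
    hence "(real i - real j) / (real n + 1) = 0" using tt_diff[of i j] by simp
    thus "i = j" using n1 by simp
  qed
  interpret config T d
  proof
    show "finite T" unfolding T_def by simp
    show "0 < d" "d \<le> 1" unfolding d_def by auto
    fix u assume "u \<in> T"
    then obtain i where i: "i \<le> n" "u = tt i" unfolding T_def by auto
    have "real i / (real n + 1) \<ge> 0" by simp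
    moreover have "real i / (real n + 1) \<le> 1" using i n1 by (simp add: divide_le_eq)
    ultimately show "1 \<le> u \<and> u \<le> 2" unfolding i tt_def by simp
  next
    fix u v assume "u \<in> T" "v \<in> T" "u \<noteq> v"
    then obtain i j where ij: "u = tt i" "v = tt j" "i \<noteq> j" unfolding T_def by auto
    have "1 \<le> \<bar>real i - real j\<bar>" using ij(3) by linarith
    hence "1 / (real n + 1) \<le> \<bar>real i - real j\<bar> / (real n + 1)" using n1 by (intro divide_right_mono) auto
    thus "d \<le> \<bar>u - v\<bar>" unfolding d_def ij tt_diff by simp
  qed
  obtain N S where N: "is_norm N" "smooth_norm N" "strictly_convex_norm N"
    and S: "M_set N S" "finite S" "card T \<le> card S + 1"
    using main_config by blast
  have "card T = n + 1" unfolding T_def using card_image[OF inj] by simp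
  hence "n \<le> card S" using S(3) by simp
  hence "m_val N \<ge> enat n" using m_val_ge S by blast
  thus ?thesis using N by blast
qed


end
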